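(* Let $W'$ and $W''$ be B-DMCs, and let $W^-=W'\boxminus W''$ and $W^+=W'\boxplus W''$. Then $$J(W^-)+J(W^+)\ \ge\ J(W')+J(W''),$$ and equality holds only if $J(W')\in\{0,1\}$ or $J(W'')\in\{0,1\}$.
   Context: A B-DMC $V$ is a channel with input alphabet $\{0,1\}$, a finite output alphabet $\mathcal Y$ and transition probabilities $V(y|x)$. With base-2 logarithms: $Z(V)=\sum_y\sqrt{V(y|0)V(y|1)}$ and $J(V)=\log\frac{2}{1+Z(V)}$. For B-DMCs $V':\{0,1\}\to\mathcal Y_1$ and $V'':\{0,1\}\to\mathcal Y_2$ define $V'\boxminus V'':\{0,1\}\to\mathcal Y_1\times\mathcal Y_2$ by $(V'\boxminus V'')(y_1,y_2|x_1)=\sum_{x_2\in\{0,1\}}\frac12V'(y_1|x_1\oplus x_2)V''(y_2|x_2)$, and $V'\boxplus V'':\{0,1\}\to\mathcal Y_1\times\mathcal Y_2\times\{0,1\}$ by $(V'\boxplus V'')(y_1,y_2,x_1|x_2)=\frac12V'(y_1|x_1\oplus x_2)V''(y_2|x_2)$. *)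

theory Defs
  imports "HOL-Analysis.Analysis"
begin

text \<open>A B-DMC with input alphabet {0,1} (encoded as bool: False = 0, True = 1) and
finite output alphabet (a finite type 'y). V x y is the transition probability V(y|x).\<close>

definition bdmc :: "(bool \<Rightarrow> 'y::finite \<Rightarrow> real) \<Rightarrow> bool" where
  "bdmc V \<longleftrightarrow> (\<forall>x y. 0 \<le> V x y) \<and> (\<forall>x. (\<Sum>y\<in>UNIV. V x y) = 1)"

definition bhatt :: "(bool \<Rightarrow> 'y::finite \<Rightarrow> real) \<Rightarrow> real" where
  "bhatt V = (\<Sum>y\<in>UNIV. sqrt (V False y * V True y))"

definition Jfun :: "(bool \<Rightarrow> 'y::finite \<Rightarrow> real) \<Rightarrow> real" where
  "Jfun V = log 2 (2 / (1 + bhatt V))"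

text \<open>XOR on bits is (\<noteq>) on bool.\<close>

definition chan_minus ::
  "(bool \<Rightarrow> 'a::finite \<Rightarrow> real) \<Rightarrow> (bool \<Rightarrow> 'b::finite \<Rightarrow> real) \<Rightarrow> bool \<Rightarrow> ('a \<times> 'b) \<Rightarrow> real" where
  "chan_minus V1 V2 x1 yy = (\<Sum>x2\<in>UNIV. (1/2) * V1 (x1 \<noteq> x2) (fst yy) * V2 x2 (snd yy))"

definition chan_plus ::
  "(bool \<Rightarrow> 'a::finite \<Rightarrow> real) \<Rightarrow> (bool \<Rightarrow> 'b::finite \<Rightarrow> real) \<Rightarrow> bool \<Rightarrow> ('a \<times> 'b \<times> bool) \<Rightarrow> real" where
  "chan_plus V1 V2 x2 yy = (case yy of (y1, y2, x1) \<Rightarrow> (1/2) * V1 (x1 \<noteq> x2) y1 * V2 x2 y2)"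

end

theory Submission
  imports Defs
begin

lemma poly_key:
  fixes p q r t :: real
  assumes "p \<ge> 0" "q \<ge> 0" "r \<ge> 0" "t \<ge> 0"
  shows "sqrt ((p^2*r^2+q^2*t^2)*(p^2*t^2+q^2*r^2)) \<le> p*q*(r^2+t^2)+r*t*(p^2+q^2)-2*p*q*r*t"
proof -
  let ?R = "p*q*(r^2+t^2)+r*t*(p^2+q^2)-2*p*q*r*t"
  have R: "?R = p*q*(r^2+t^2)+r*t*(p-q)^2" by (simp add: algebra_simps power2_eq_square)
  have R0: "?R \<ge> 0" unfolding R using assms by simp
  have id: "?R^2 - (p^2*r^2+q^2*t^2)*(p^2*t^2+q^2*r^2) = 2*(p*q*r*t)*((p-q)^2*(r-t)^2)"
    by (simp add: algebra_simps power2_eq_square)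
  have "0 \<le> 2*(p*q*r*t)*((p-q)^2*(r-t)^2)" using assms by simp
  hence "(p^2*r^2+q^2*t^2)*(p^2*t^2+q^2*r^2) \<le> ?R^2" using id by linarith
  hence "sqrt ((p^2*r^2+q^2*t^2)*(p^2*t^2+q^2*r^2)) \<le> sqrt (?R^2)" by (rule real_sqrt_le_mono)
  thus ?thesis using R0 by simp
qed

lemma key2:
  fixes a b c d :: real
  assumes "a \<ge> 0" "b \<ge> 0" "c \<ge> 0" "d \<ge> 0"
  shows "sqrt ((a*d+b*c)*(a*c+b*d)) \<le> sqrt (a*b)*(d+c) + sqrt (d*c)*(a+b) - 2* sqrt(a*b)* sqrt(d*c)"
proof -
  have "sqrt (((sqrt a)^2*(sqrt d)^2+(sqrt b)^2*(sqrt c)^2)*((sqrt a)^2*(sqrt c)^2+(sqrt b)^2*(sqrt d)^2))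
     \<le> sqrt a* sqrt b*((sqrt d)^2+(sqrt c)^2)+sqrt d* sqrt c*((sqrt a)^2+(sqrt b)^2)-2* sqrt a* sqrt b* sqrt d* sqrt c"
    by (rule poly_key) (use assms in auto)
  thus ?thesis using assms by (simp add: real_sqrt_mult mult_ac)
qed

lemma sum_prod_UNIV:
  "(\<Sum>y\<in>(UNIV::('a::finite\<times>'b::finite) set). f y) = (\<Sum>y1\<in>UNIV. \<Sum>y2\<in>UNIV. f (y1,y2))"
  by (subst UNIV_Times_UNIV[symmetric]) (simp add: sum.cartesian_product)

lemma bhatt_bounds:
  assumes "bdmc V" shows "0 \<le> bhatt V" "bhatt V \<le> 1"
proof -
  show "0 \<le> bhatt V" unfolding bhatt_def using assms by (auto simp: bdmc_def intro!: sum_nonneg)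
  have "bhatt V \<le> (\<Sum>y\<in>UNIV. (V False y + V True y)/2)" unfolding bhatt_def
    apply (rule sum_mono)
    using assms unfolding bdmc_def by (metis arith_geo_mean_sqrt)
  also have "\<dots> = 1" using assms unfolding bdmc_def by (simp add: sum.distrib sum_divide_distrib[symmetric])
  finally show "bhatt V \<le> 1" .
qed


lemma bhatt_plus:
  fixes W1 :: "bool \<Rightarrow> 'a::finite \<Rightarrow> real" and W2 :: "bool \<Rightarrow> 'b::finite \<Rightarrow> real"
  assumes "bdmc W1" "bdmc W2"
  shows "bhatt (chan_plus W1 W2) = bhatt W1 * bhatt W2"
proof -
  have nn: "\<And>x y. W1 x y \<ge> 0" "\<And>x y. W2 x y \<ge> 0" using assms unfolding bdmc_def by auto
  have pt: "(\<Sum>x1\<in>UNIV. sqrt (chan_plus W1 W2 False (y1,y2,x1) * chan_plus W1 W2 True (y1,y2,x1)))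
     = sqrt (W1 False y1 * W1 True y1) * sqrt (W2 False y2 * W2 True y2)" for y1 y2
  proof -
    have e: "sqrt ((1/2) * W1 a y1 * W2 False y2 * ((1/2) * W1 b y1 * W2 True y2)) =
       (1/2) * sqrt (W1 a y1 * W1 b y1) * sqrt (W2 False y2 * W2 True y2)" for a b
      by (simp add: real_sqrt_mult[symmetric] real_sqrt_divide mult_ac)
    show ?thesis unfolding chan_plus_def using e[of False True] e[of True False]
      by (simp add: UNIV_bool mult_ac)
  qed
  have "bhatt (chan_plus W1 W2) = (\<Sum>y1\<in>UNIV. \<Sum>y2\<in>UNIV. \<Sum>x1\<in>UNIV.
        sqrt (chan_plus W1 W2 False (y1,y2,x1) * chan_plus W1 W2 True (y1,y2,x1)))"
    unfolding bhatt_def by (simp add: sum_prod_UNIV)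
  also have "\<dots> = (\<Sum>y1\<in>UNIV. \<Sum>y2\<in>UNIV. sqrt (W1 False y1 * W1 True y1) * sqrt (W2 False y2 * W2 True y2))"
    by (simp add: pt)
  also have "\<dots> = bhatt W1 * bhatt W2" unfolding bhatt_def by (simp add: sum_product)
  finally show ?thesis .
qed

lemma bhatt_minus:
  fixes W1 :: "bool \<Rightarrow> 'a::finite \<Rightarrow> real" and W2 :: "bool \<Rightarrow> 'b::finite \<Rightarrow> real"
  assumes "bdmc W1" "bdmc W2"
  shows "bhatt (chan_minus W1 W2) \<le> bhatt W1 + bhatt W2 - bhatt W1 * bhatt W2"
proof -
  have nn: "\<And>x y. W1 x y \<ge> 0" "\<And>x y. W2 x y \<ge> 0" using assms unfolding bdmc_def by auto
  have s1: "\<And>x. (\<Sum>y\<in>UNIV. W1 x y) = 1" "\<And>x. (\<Sum>y\<in>UNIV. W2 x y) = 1" using assms unfolding bdmc_def by auto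
  define f where "f y1 y2 = (1/2) * (sqrt (W1 False y1 * W1 True y1) * (W2 False y2 + W2 True y2)
      + sqrt (W2 False y2 * W2 True y2) * (W1 False y1 + W1 True y1)
      - 2 * sqrt (W1 False y1 * W1 True y1) * sqrt (W2 False y2 * W2 True y2))" for y1 y2
  have pt: "sqrt (chan_minus W1 W2 False (y1,y2) * chan_minus W1 W2 True (y1,y2)) \<le> f y1 y2" for y1 y2
  proof -
    let ?a = "W1 False y1" and ?b = "W1 True y1" and ?d = "W2 False y2" and ?c = "W2 True y2"
    have h1: "chan_minus W1 W2 False (y1,y2) * chan_minus W1 W2 True (y1,y2)
       = (1/4) * ((?a*?d+?b*?c)*(?a*?c+?b*?d))"
      unfolding chan_minus_def by (simp add: UNIV_bool algebra_simps)
    have h2: "sqrt ((1/4) * Y) = (1/2) * sqrt Y" for Y :: real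
    proof -
      have "sqrt ((1/4) * Y) = sqrt ((1/2)^2 * Y)" by (simp add: power2_eq_square)
      also have "\<dots> = sqrt ((1/2)^2) * sqrt Y" by (rule real_sqrt_mult)
      finally have "sqrt ((1/4) * Y) = sqrt ((1/2)^2) * sqrt Y" .
      thus ?thesis by simp
    qed
    have "sqrt (chan_minus W1 W2 False (y1,y2) * chan_minus W1 W2 True (y1,y2))
       = (1/2) * sqrt ((?a*?d+?b*?c)*(?a*?c+?b*?d))"
      unfolding h1 by (rule h2)
    also have "\<dots> \<le> f y1 y2" unfolding f_def
      using key2[of ?a ?b ?c ?d] nn by (simp add: mult_ac)
    finally show ?thesis .
  qed
  have "bhatt (chan_minus W1 W2) \<le> (\<Sum>y1\<in>UNIV. \<Sum>y2\<in>UNIV. f y1 y2)"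
    unfolding bhatt_def sum_prod_UNIV by (intro sum_mono pt)
  also have "\<dots> = bhatt W1 + bhatt W2 - bhatt W1 * bhatt W2"
  proof -
    define A where "A y1 = sqrt (W1 False y1 * W1 True y1)" for y1
    define C where "C y2 = sqrt (W2 False y2 * W2 True y2)" for y2
    have B1: "(\<Sum>y\<in>UNIV. W1 False y + W1 True y) = 2" using s1 by (simp add: sum.distrib)
    have B2: "(\<Sum>y\<in>UNIV. W2 False y + W2 True y) = 2" using s1 by (simp add: sum.distrib)
    have fe: "f y1 y2 = (1/2 * A y1) * (W2 False y2 + W2 True y2) + (1/2 * (W1 False y1 + W1 True y1)) * C y2
       - A y1 * C y2" for y1 y2 unfolding f_def A_def C_def by (simp add: algebra_simps)
    have fy: "(\<Sum>y2\<in>UNIV. f y1 y2) = (1/2 * A y1) * 2 + (1/2 * (W1 False y1 + W1 True y1)) * sum C UNIV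
       - A y1 * sum C UNIV" for y1
      unfolding fe by (simp only: sum_subtractf sum.distrib sum_distrib_left[symmetric] B2) (simp add: s1)
    have "(\<Sum>y1\<in>UNIV. \<Sum>y2\<in>UNIV. f y1 y2) = (\<Sum>y1\<in>UNIV. A y1 + (1/2 * sum C UNIV) * (W1 False y1 + W1 True y1)
       - sum C UNIV * A y1)" by (intro sum.cong refl) (simp add: fy algebra_simps)
    also have "\<dots> = sum A UNIV + (1/2 * sum C UNIV) * 2 - sum C UNIV * sum A UNIV"
      by (simp only: sum_subtractf sum.distrib sum_distrib_left[symmetric] B1) (simp add: s1)
    also have "\<dots> = bhatt W1 + bhatt W2 - bhatt W1 * bhatt W2"
      unfolding bhatt_def A_def C_def by simp
    finally show ?thesis .
  qed
  finally show ?thesis .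
qed


lemma J_eq: "bhatt V \<ge> 0 \<Longrightarrow> Jfun V = 1 - log 2 (1 + bhatt V)"
  unfolding Jfun_def by (simp add: log_divide)

lemma bhatt_nonneg: "(\<And>x y. V x y \<ge> 0) \<Longrightarrow> bhatt V \<ge> 0"
  unfolding bhatt_def by (auto intro!: sum_nonneg)

theorem proposition1:
  fixes W1 :: "bool \<Rightarrow> 'a::finite \<Rightarrow> real" and W2 :: "bool \<Rightarrow> 'b::finite \<Rightarrow> real"
  assumes "bdmc W1" and "bdmc W2"
  shows "Jfun (chan_minus W1 W2) + Jfun (chan_plus W1 W2) \<ge> Jfun W1 + Jfun W2 \<and>
         (Jfun (chan_minus W1 W2) + Jfun (chan_plus W1 W2) = Jfun W1 + Jfun W2 \<longrightarrow>
           (Jfun W1 \<in> {0, 1} \<or> Jfun W2 \<in> {0, 1}))"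
proof -
  have nn: "\<And>x y. W1 x y \<ge> 0" "\<And>x y. W2 x y \<ge> 0" using assms unfolding bdmc_def by auto
  define a where "a = bhatt W1"
  define b where "b = bhatt W2"
  define m where "m = bhatt (chan_minus W1 W2)"
  have a0: "0 \<le> a" "a \<le> 1" using bhatt_bounds[OF assms(1)] a_def by auto
  have b0: "0 \<le> b" "b \<le> 1" using bhatt_bounds[OF assms(2)] b_def by auto
  have m0: "0 \<le> m" unfolding m_def chan_minus_def
    by (rule bhatt_nonneg) (use nn in \<open>auto intro!: sum_nonneg\<close>)
  have mle: "m \<le> a + b - a*b" using bhatt_minus[OF assms] a_def b_def m_def by simp
  have pl: "bhatt (chan_plus W1 W2) = a*b" using bhatt_plus[OF assms] a_def b_def by simp
  have ab0: "0 \<le> a*b" using a0 b0 by simp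
  have LHS: "Jfun (chan_minus W1 W2) + Jfun (chan_plus W1 W2) = 2 - log 2 ((1+m)*(1+a*b))"
    using J_eq[of "chan_minus W1 W2"] J_eq[of "chan_plus W1 W2"] m0 pl ab0 m_def
    by (simp add: log_mult)
  have RHS: "Jfun W1 + Jfun W2 = 2 - log 2 ((1+a)*(1+b))"
    using J_eq[of W1] J_eq[of W2] a0 b0 a_def b_def by (simp add: log_mult)
  have diff: "(1+a)*(1+b) - (1+a+b-a*b)*(1+a*b) = (a*b)*((1-a)*(1-b))" by (simp add: algebra_simps)
  have d0: "0 \<le> (a*b)*((1-a)*(1-b))" using a0 b0 by simp
  have "(1+m)*(1+a*b) \<le> (1+a+b-a*b)*(1+a*b)" using mle ab0 by (intro mult_right_mono) auto
  hence le: "(1+m)*(1+a*b) \<le> (1+a)*(1+b)" using diff d0 by linarith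
  have pos: "0 < (1+m)*(1+a*b)" using m0 ab0 by simp
  have part1: "Jfun (chan_minus W1 W2) + Jfun (chan_plus W1 W2) \<ge> Jfun W1 + Jfun W2"
    unfolding LHS RHS using le pos by simp
  have part2: "Jfun W1 \<in> {0, 1} \<or> Jfun W2 \<in> {0, 1}"
    if eq: "Jfun (chan_minus W1 W2) + Jfun (chan_plus W1 W2) = Jfun W1 + Jfun W2"
  proof -
    have "log 2 ((1+m)*(1+a*b)) = log 2 ((1+a)*(1+b))" using eq unfolding LHS RHS by simp
    moreover have "0 < (1+a)*(1+b)" using a0 b0 by simp
    ultimately have "(1+a)*(1+b) \<le> (1+m)*(1+a*b)" using pos
      by (metis log_le_cancel_iff order_refl one_less_numeral_iff semiring_norm(76))
    hence "(1+m)*(1+a*b) = (1+a)*(1+b)" using le by linarith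
    hence "(a*b)*((1-a)*(1-b)) \<le> 0" using diff le \<open>(1+m)*(1+a*b) \<le> (1+a+b-a*b)*(1+a*b)\<close> by linarith
    hence "(a*b)*((1-a)*(1-b)) = 0" using d0 by linarith
    hence "a = 0 \<or> a = 1 \<or> b = 0 \<or> b = 1" by auto
    moreover have "Jfun W1 = 1 - log 2 (1+a)" "Jfun W2 = 1 - log 2 (1+b)"
      using J_eq[of W1] J_eq[of W2] a0 b0 a_def b_def by auto
    ultimately show ?thesis by auto
  qed
  show ?thesis using part1 part2 by blast
qed

end
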